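(* Let $A,B,\beta,\xi_0>0$ and let $\{w_n\}_{n\ge0}$ be functions $w_n\colon[\xi_0,\infty)\to[0,1]$ with $w_{n+1}(\xi)\le w_n(\xi)$ for all $n,\xi$. Suppose $w_0$ decays rapidly in $\xi$ and that $$w_{n+N}(\xi)\le(1-A\xi^{-\beta})w_n(\xi)\quad\text{for all } n\ge0,\ \xi\ge\xi_0 \text{ and all integers } N>B\log\xi.$$ Then the sequence $s_n=\sup_{\xi\ge\xi_0}w_n(\xi)$ decays rapidly in $n$.
   Context: A function $w\colon D\subseteq(0,\infty)\to\mathbb R$ decays rapidly in $\xi$ if for each $\ell\ge1$ there is $C$ with $|w(\xi)|\le C\xi^{-\ell}$ for all $\xi\in D$. A sequence $\{s_n\}$ decays rapidly in $n$ if for each $\ell\ge1$ there is $C$ with $|s_n|\le Cn^{-\ell}$ for all $n\ge1$. *)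

theory Defs
  imports "HOL-Analysis.Analysis"
begin

definition decays_rapidly_on :: "real set \<Rightarrow> (real \<Rightarrow> real) \<Rightarrow> bool" where
  "decays_rapidly_on D w \<longleftrightarrow>
     (\<forall>l::nat. l \<ge> 1 \<longrightarrow> (\<exists>C. \<forall>\<xi>\<in>D. \<bar>w \<xi>\<bar> \<le> C * \<xi> powr (- real l)))"

definition seq_decays_rapidly :: "(nat \<Rightarrow> real) \<Rightarrow> bool" where
  "seq_decays_rapidly s \<longleftrightarrow>
     (\<forall>l::nat. l \<ge> 1 \<longrightarrow> (\<exists>C. \<forall>n::nat. n \<ge> 1 \<longrightarrow> \<bar>s n\<bar> \<le> C * real n powr (- real l)))"

end

theory Submission
  imports Defs "HOL-Real_Asymp.Real_Asymp"
begin

lemma asymp_aux: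
  fixes A B d l :: real assumes "A>0" "B>0" "d>0"
  shows "eventually (\<lambda>x. exp(-A * x powr (-1/2) * (x/(B*d*ln x + 1) - 1)) \<le> x powr (-l)) at_top"
  using assms by real_asymp

theorem proposition7p2:
  fixes A B \<beta> \<xi>0 :: real and w :: "nat \<Rightarrow> real \<Rightarrow> real"
  assumes "A > 0" and "B > 0" and "\<beta> > 0" and "\<xi>0 > 0"
    and range01: "\<And>n \<xi>. \<xi> \<ge> \<xi>0 \<Longrightarrow> 0 \<le> w n \<xi> \<and> w n \<xi> \<le> 1"
    and mono: "\<And>n \<xi>. \<xi> \<ge> \<xi>0 \<Longrightarrow> w (Suc n) \<xi> \<le> w n \<xi>"
    and decay0: "decays_rapidly_on {\<xi>0..} (w 0)"
    and contr: "\<And>n \<xi> (N::nat). \<xi> \<ge> \<xi>0 \<Longrightarrow> real N > B * ln \<xi> \<Longrightarrow>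
                  w (n + N) \<xi> \<le> (1 - A * \<xi> powr (- \<beta>)) * w n \<xi>"
  shows "seq_decays_rapidly (\<lambda>n. Sup (w n ` {\<xi>0..}))"
  unfolding seq_decays_rapidly_def
proof (intro allI impI)
  fix l :: nat assume l1: "l \<ge> 1"
  define d where "d = 1 / (2 * \<beta>)"
  have dpos: "d > 0" using assms(3) by (simp add: d_def)
  have dbeta: "d * \<beta> = 1/2" using assms(3) by (simp add: d_def)
  define m :: nat where "m = nat \<lceil>real l * 2 * \<beta>\<rceil> + 1"
  have m1: "m \<ge> 1" by (simp add: m_def)
  have md: "real m * d \<ge> real l"
  proof -
    have "real m \<ge> real l * 2 * \<beta>" unfolding m_def by linarith
    hence "real m * d \<ge> real l * 2 * \<beta> * d" using dpos by (simp add: mult_right_mono)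
    also have "real l * 2 * \<beta> * d = real l" using assms(3) by (simp add: d_def)
    finally show ?thesis .
  qed
  obtain C0 where C0: "\<And>\<xi>. \<xi> \<in> {\<xi>0..} \<Longrightarrow> \<bar>w 0 \<xi>\<bar> \<le> C0 * \<xi> powr (- real m)"
    using decay0 m1 unfolding decays_rapidly_on_def by blast
  have C0pos: "C0 \<ge> 0"
  proof -
    have "0 \<le> C0 * \<xi>0 powr (- real m)" using C0[of \<xi>0] by (smt (verit) atLeast_iff)
    moreover have "\<xi>0 powr (- real m) > 0" using assms(4) by simp
    ultimately show ?thesis by (simp add: zero_le_mult_iff)
  qed
  have antimono: "w j \<xi> \<le> w i \<xi>" if "i \<le> j" "\<xi> \<ge> \<xi>0" for i j \<xi>
    using that(1)
  proof (induction j rule: dec_induct)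
    case base then show ?case by simp
  next
    case (step j) then show ?case using mono[OF that(2), of j] by linarith
  qed
  have iter: "w (k * N) \<xi> \<le> exp (- (A * \<xi> powr (-\<beta>))) ^ k"
    if "\<xi> \<ge> \<xi>0" "real N > B * ln \<xi>" for k N \<xi>
  proof (induction k)
    case 0 then show ?case using range01[OF that(1)] by simp
  next
    case (Suc k)
    define a where "a = A * \<xi> powr (-\<beta>)"
    have c: "w (k * N + N) \<xi> \<le> (1 - a) * w (k*N) \<xi>" using contr[OF that] a_def by simp
    have wk: "0 \<le> w (k*N) \<xi>" using range01[OF that(1)] by simp
    have E: "0 \<le> exp (-a) ^ k" by simp
    have "w (Suc k * N) \<xi> \<le> exp (-a) * exp (-a) ^ k"
    proof (cases "1 - a \<ge> 0")
      case True
      have "(1 - a) * w (k*N) \<xi> \<le> (1-a) * exp (-a) ^ k"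
        using Suc a_def True by (simp add: mult_left_mono)
      also have "\<dots> \<le> exp (-a) * exp (-a) ^ k"
        using exp_ge_add_one_self[of "-a"] E by (intro mult_right_mono) auto
      finally show ?thesis using c by (simp add: add.commute)
    next
      case False
      have "(1 - a) * w (k*N) \<xi> \<le> 0" using False wk by (simp add: mult_nonpos_nonneg)
      have "0 \<le> exp (-a) * exp (-a) ^ k" using E by simp
      moreover have "Suc k * N = k * N + N" by simp
      ultimately show ?thesis using c \<open>(1 - a) * w (k*N) \<xi> \<le> 0\<close>
        by (simp only:)
    qed
    thus ?case using a_def by simp
  qed
  have ev: "eventually (\<lambda>x. exp(-A * x powr (-1/2) * (x/(B*d*ln x + 1) - 1)) \<le> x powr (-real l)) at_top"
    using asymp_aux[OF assms(1,2) dpos] .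
  have "eventually (\<lambda>n. exp(-A * real n powr (-1/2) * (real n/(B*d*ln (real n) + 1) - 1)) \<le> real n powr (-real l)) sequentially"
    using eventually_compose_filterlim[OF ev filterlim_real_sequentially] .
  then obtain n1 where n1: "\<And>n. n \<ge> n1 \<Longrightarrow> exp(-A * real n powr (-1/2) * (real n/(B*d*ln (real n) + 1) - 1)) \<le> real n powr (-real l)"
    unfolding eventually_sequentially by blast
  define N1 where "N1 = max n1 1"
  have claim: "w n \<xi> \<le> (C0 + 1) * real n powr (- real l)" if "n \<ge> N1" "\<xi> \<ge> \<xi>0" for n \<xi>
  proof -
    have n1': "n \<ge> 1" "n \<ge> n1" using that N1_def by auto
    have npos: "real n > 0" using n1' by simp
    have xipos: "\<xi> > 0" using that assms(4) by linarith
    have lp: "real n powr (- real l) \<ge> 0" by simp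
    show ?thesis
    proof (cases "\<xi> \<ge> real n powr d")
      case True
      have "w n \<xi> \<le> w 0 \<xi>" using antimono that by simp
      also have "\<dots> \<le> C0 * \<xi> powr (- real m)" using C0[of \<xi>] that by auto
      also have "\<dots> \<le> C0 * (real n powr d) powr (- real m)"
        using True C0pos npos by (intro mult_left_mono powr_mono2') auto
      also have "(real n powr d) powr (- real m) = real n powr (- (real m * d))"
        by (simp add: powr_powr mult.commute)
      also have "C0 * \<dots> \<le> C0 * real n powr (- real l)"
        using md n1' C0pos by (intro mult_left_mono powr_mono) auto
      also have "\<dots> \<le> (C0 + 1) * real n powr (- real l)" using lp by (simp add: distrib_right)
      finally show ?thesis .
    next
      case False
      hence xl: "\<xi> < real n powr d" by simp
      define N :: nat where "N = nat \<lfloor>B * ln \<xi>\<rfloor> + 1"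
      have NB: "real N > B * ln \<xi>" unfolding N_def by linarith
      have Npos: "real N > 0" unfolding N_def by simp
      define M where "M = B * d * ln (real n) + 1"
      have lnn: "ln (real n) \<ge> 0" using n1' by simp
      have lnxi: "ln \<xi> < d * ln (real n)"
      proof -
        have "ln \<xi> < ln (real n powr d)" using xl xipos npos
          by (subst ln_less_cancel_iff) auto
        also have "\<dots> = d * ln (real n)" using npos by (simp add: ln_powr)
        finally show ?thesis .
      qed
      have NM: "real N \<le> M"
      proof -
        have "B * ln \<xi> \<le> B * (d * ln (real n))" using lnxi assms(2) by simp
        moreover have "0 \<le> B * (d * ln (real n))" using assms(2) dpos lnn by simp
        ultimately have "real (nat \<lfloor>B * ln \<xi>\<rfloor>) \<le> B * d * ln (real n)" by linarith
        thus ?thesis unfolding N_def M_def by simp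
      qed
      define k where "k = n div N"
      have kN: "k * N \<le> n" unfolding k_def by simp
      have kge: "real k \<ge> real n / real N - 1"
      proof -
        have "real n = real (n div N) * real N + real (n mod N)"
        proof -
          have "n = n div N * N + n mod N" by simp
          hence "real n = real (n div N * N + n mod N)" by (rule arg_cong)
          thus ?thesis by (simp only: of_nat_add of_nat_mult)
        qed
        moreover have "real (n mod N) < real N" using Npos by simp
        ultimately have "real n < (real k + 1) * real N" unfolding k_def by (simp add: algebra_simps)
        thus ?thesis using Npos by (simp add: field_simps)
      qed
      have kge2: "real k \<ge> real n / M - 1"
      proof -
        have "real n / M \<le> real n / real N" using NM Npos by (intro divide_left_mono) auto
        thus ?thesis using kge by linarith
      qed
      define a where "a = A * \<xi> powr (-\<beta>)"
      have a_ge: "a \<ge> A * real n powr (-1/2)"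
      proof -
        have "\<xi> powr \<beta> \<le> (real n powr d) powr \<beta>" using xl xipos assms(3) by (intro powr_mono2) auto
        also have "\<dots> = real n powr (1/2)" by (simp only: powr_powr dbeta)
        finally have "\<xi> powr \<beta> \<le> real n powr (1/2)" .
        hence "inverse (real n powr (1/2)) \<le> inverse (\<xi> powr \<beta>)" using xipos
          by (intro le_imp_inverse_le) auto
        hence "real n powr (-1/2) \<le> \<xi> powr (-\<beta>)"
          by (simp add: powr_minus)
        thus ?thesis unfolding a_def using assms(1) by simp
      qed
      have "w n \<xi> \<le> w (k * N) \<xi>" using antimono kN that by simp
      also have "\<dots> \<le> exp (-a) ^ k" using iter[OF that(2) NB] a_def by simp
      also have "\<dots> = exp (- (a * real k))" by (simp add: exp_of_nat_mult[symmetric] mult.commute)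
      also have "\<dots> \<le> exp (-A * real n powr (-1/2) * (real n / M - 1))"
      proof -
        have h0: "A * real n powr (-1/2) \<ge> 0" using assms(1) by simp
        have "A * real n powr (-1/2) * (real n / M - 1) \<le> A * real n powr (-1/2) * real k"
          using kge2 h0 by (intro mult_left_mono) auto
        also have "\<dots> \<le> a * real k" using a_ge by (intro mult_right_mono) auto
        finally show ?thesis by simp
      qed
      also have "\<dots> \<le> real n powr (- real l)" using n1[OF n1'(2)] unfolding M_def by simp
      also have "\<dots> \<le> (C0 + 1) * real n powr (- real l)" using lp C0pos
        by (simp add: distrib_right)
      finally show ?thesis .
    qed
  qed
  define C where "C = (C0 + 1) * real N1 ^ l"
  show "\<exists>C. \<forall>n\<ge>1. \<bar>Sup (w n ` {\<xi>0..})\<bar> \<le> C * real n powr - real l"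
  proof (intro exI[of _ C] allI impI)
    fix n :: nat assume n1: "n \<ge> 1"
    have bdd: "bdd_above (w n ` {\<xi>0..})" using range01 by (auto intro!: bdd_aboveI[of _ 1])
    have ne: "w n ` {\<xi>0..} \<noteq> {}" by auto
    have S0: "Sup (w n ` {\<xi>0..}) \<ge> 0"
    proof -
      have "w n \<xi>0 \<le> Sup (w n ` {\<xi>0..})" using bdd by (intro cSup_upper) auto
      thus ?thesis using range01[of \<xi>0 n] by linarith
    qed
    have N1ge: "real N1 ^ l \<ge> 1" using N1_def by simp
    have np: "real n powr (- real l) = inverse (real n ^ l)" using n1
      by (simp add: powr_minus powr_realpow)
    have "Sup (w n ` {\<xi>0..}) \<le> C * real n powr - real l"
    proof (rule cSup_least[OF ne], clarsimp)
      fix \<xi> assume xi: "\<xi>0 \<le> \<xi>"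
      show "w n \<xi> \<le> C * real n powr - real l"
      proof (cases "n \<ge> N1")
        case True
        have "w n \<xi> \<le> (C0 + 1) * real n powr (- real l)" using claim True xi by blast
        also have "\<dots> \<le> C * real n powr - real l" unfolding C_def using C0pos N1ge
          by (intro mult_right_mono) (auto intro: order_trans[of _ "(C0+1)*1"])
        finally show ?thesis .
      next
        case False
        have "real n ^ l \<le> real N1 ^ l" using False by (intro power_mono) auto
        have X0: "0 \<le> real N1 ^ l * inverse (real n ^ l)" by simp
        from \<open>real n ^ l \<le> real N1 ^ l\<close> have "1 \<le> real N1 ^ l * inverse (real n ^ l)" using n1
          by (simp add: field_simps)
        also have "\<dots> \<le> C * real n powr - real l" unfolding C_def np
          using mult_right_mono[OF _ X0, of 1 "C0+1"] C0pos by (simp add: mult.assoc)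
        finally show ?thesis using range01[OF xi, of n] by linarith
      qed
    qed
    thus "\<bar>Sup (w n ` {\<xi>0..})\<bar> \<le> C * real n powr - real l" using S0 by simp
  qed
qed

end
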